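(* Let $p \in \mathbb S$ be skew and let $t \in {}^\omega 2$ with $t \neq 0$. Then $|[p] \cap ([p] + t)| \leq 2$. In particular, $p$ and $p + t$ are incompatible in $\mathbb S$.
   Context: ${}^\omega 2$ is the Cantor space with bitwise addition modulo $2$; $0$ is the constant zero sequence. $\mathbb S$ is the set of perfect subtrees of ${}^{<\omega}2$, ordered by inclusion; $[p]$ is the set of branches of $p$; $p,q\in\mathbb S$ are compatible if some $r\in\mathbb S$ satisfies $r\subseteq p$ and $r\subseteq q$. For $p\in\mathbb S$ and $t\in{}^\omega 2$, $p+t=\{\sigma+t\restriction|\sigma| : \sigma\in p\}$. A node $\sigma\in p$ is splitting if both $\sigma^\frown 0,\sigma^\frown 1\in p$. A tree $p\in\mathbb S$ is skew if for every $n\in\omega$ there is at most one splitting node of $p$ of length $n$. *)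

theory Defs
  imports Main
begin

text \<open>Cantor space: elements of ${}^\omega 2$ are functions nat => bool (True = 1, False = 0);
finite binary sequences ${}^{<\omega}2$ are bool lists. Bitwise addition modulo 2 is xor.\<close>

type_synonym cantor = "nat \<Rightarrow> bool"
type_synonym node = "bool list"

definition restr :: "cantor \<Rightarrow> nat \<Rightarrow> node" where
  "restr x n = map x [0..<n]"

definition cadd :: "cantor \<Rightarrow> cantor \<Rightarrow> cantor" where
  "cadd x t = (\<lambda>i. x i \<noteq> t i)"

definition zero_seq :: cantor where
  "zero_seq = (\<lambda>_. False)"

definition is_tree :: "node set \<Rightarrow> bool" where
  "is_tree p \<longleftrightarrow> p \<noteq> {} \<and> (\<forall>\<sigma> \<tau>. \<sigma> @ \<tau> \<in> p \<longrightarrow> \<sigma> \<in> p)"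

definition splitting :: "node set \<Rightarrow> node \<Rightarrow> bool" where
  "splitting p \<sigma> \<longleftrightarrow> \<sigma> @ [False] \<in> p \<and> \<sigma> @ [True] \<in> p"

definition perfect_tree :: "node set \<Rightarrow> bool" where
  "perfect_tree p \<longleftrightarrow> is_tree p \<and> (\<forall>\<sigma>\<in>p. \<exists>\<tau>. splitting p (\<sigma> @ \<tau>))"

definition Sacks :: "node set set" where
  "Sacks = {p. perfect_tree p}"

definition branches :: "node set \<Rightarrow> cantor set" where
  "branches p = {x. \<forall>n. restr x n \<in> p}"

definition tree_add :: "node set \<Rightarrow> cantor \<Rightarrow> node set" where
  "tree_add p t = {map2 (\<noteq>) \<sigma> (restr t (length \<sigma>)) | \<sigma>. \<sigma> \<in> p}"

definition compatible :: "node set \<Rightarrow> node set \<Rightarrow> bool" where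
  "compatible p q \<longleftrightarrow> (\<exists>r\<in>Sacks. r \<subseteq> p \<and> r \<subseteq> q)"

definition skew :: "node set \<Rightarrow> bool" where
  "skew p \<longleftrightarrow> (\<forall>n. card {\<sigma>\<in>p. splitting p \<sigma> \<and> length \<sigma> = n} \<le> 1)"

end

theory Submission
  imports Defs
begin

lemma restr_len[simp]: "length (restr x n) = n" by (simp add: restr_def)
lemma restr_nth[simp]: "i < n \<Longrightarrow> restr x n ! i = x i" by (simp add: restr_def)
lemma restr_Suc: "restr x (Suc n) = restr x n @ [x n]" by (simp add: restr_def)
lemma restr_eq: "restr a m = restr b m \<longleftrightarrow> (\<forall>i<m. a i = b i)"
  by (auto simp: list_eq_iff_nth_eq)

lemma first_diff_split:
  assumes "a \<in> branches p" "b \<in> branches p" "\<forall>i<m. a i = b i" "a m \<noteq> b m"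
  shows "splitting p (restr a m)"
proof -
  have e: "restr b m = restr a m" using assms(3) restr_eq by metis
  have "restr a (Suc m) \<in> p" "restr b (Suc m) \<in> p"
    using assms(1,2) unfolding branches_def by blast+
  hence "restr a m @ [a m] \<in> p" "restr a m @ [b m] \<in> p"
    by (simp_all only: restr_Suc e)
  thus ?thesis using assms(4) unfolding splitting_def by (cases "a m") auto
qed

lemma skew_uniq:
  assumes "skew p" "\<sigma> \<in> p" "\<tau> \<in> p" "splitting p \<sigma>" "splitting p \<tau>" "length \<sigma> = length \<tau>"
  shows "\<sigma> = \<tau>"
proof (rule ccontr)
  assume ne: "\<sigma> \<noteq> \<tau>"
  let ?A = "{\<rho>\<in>p. splitting p \<rho> \<and> length \<rho> = length \<sigma>}"
  have "?A \<subseteq> {xs. set xs \<subseteq> UNIV \<and> length xs = length \<sigma>}" by auto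
  hence fin: "finite ?A"
    by (rule finite_subset) (rule finite_lists_length_eq, simp)
  have "{\<sigma>, \<tau>} \<subseteq> ?A" using assms by auto
  hence "card {\<sigma>, \<tau>} \<le> card ?A" using fin card_mono by blast
  moreover have "card ?A \<le> 1" using assms(1) unfolding skew_def by blast
  ultimately show False using ne by simp
qed

lemma cadd_cadd[simp]: "cadd (cadd x t) t = x" by (auto simp: cadd_def)

definition xorl :: "node \<Rightarrow> cantor \<Rightarrow> node" where
  "xorl \<sigma> t = map2 (\<noteq>) \<sigma> (restr t (length \<sigma>))"

lemma xorl_len[simp]: "length (xorl \<sigma> t) = length \<sigma>" by (simp add: xorl_def)
lemma xorl_nth[simp]: "i < length \<sigma> \<Longrightarrow> xorl \<sigma> t ! i = (\<sigma> ! i \<noteq> t i)" by (simp add: xorl_def)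
lemma xorl_xorl[simp]: "xorl (xorl \<sigma> t) t = \<sigma>"
  by (rule nth_equalityI) auto
lemma xorl_snoc: "xorl (\<sigma> @ [b]) t = xorl \<sigma> t @ [b \<noteq> t (length \<sigma>)]"
  by (rule nth_equalityI) (auto simp: nth_append less_Suc_eq)

lemma tree_add_mem: "\<sigma> \<in> tree_add p t \<Longrightarrow> xorl \<sigma> t \<in> p"
proof -
  assume "\<sigma> \<in> tree_add p t"
  then obtain \<rho> where "\<rho> \<in> p" "\<sigma> = xorl \<rho> t" unfolding tree_add_def xorl_def by auto
  thus ?thesis by simp
qed

theorem lemma2p6:
  assumes "p \<in> Sacks" and "skew p" and "t \<noteq> zero_seq"
  shows "finite (branches p \<inter> (\<lambda>x. cadd x t) ` branches p)
         \<and> card (branches p \<inter> (\<lambda>x. cadd x t) ` branches p) \<le> 2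
         \<and> \<not> compatible p (tree_add p t)"
proof -
  have "\<exists>i. t i" using assms(3) unfolding zero_seq_def by auto
  define k where "k = (LEAST i. t i)"
  have tk: "t k" unfolding k_def using \<open>\<exists>i. t i\<close> by (metis LeastI)
  have tlt: "\<And>i. i < k \<Longrightarrow> \<not> t i" unfolding k_def using not_less_Least by blast
  define S where "S = branches p \<inter> (\<lambda>x. cadd x t) ` branches p"
  have yS: "cadd x t \<in> branches p" if "x \<in> S" for x
    using that unfolding S_def by auto
  have xS: "x \<in> branches p" if "x \<in> S" for x using that unfolding S_def by auto
  have inp: "restr x n \<in> p" if "x \<in> branches p" for x n using that unfolding branches_def by auto
  have spk: "splitting p (restr x k)" if "x \<in> S" for x
    by (rule first_diff_split[OF xS[OF that] yS[OF that]]) (auto simp: cadd_def tlt tk)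
  have inj: "x = x'" if "x \<in> S" "x' \<in> S" "x k = x' k" for x x'
  proof (rule ccontr)
    assume ne: "x \<noteq> x'"
    have "restr x k = restr x' k"
      using skew_uniq[OF assms(2) inp[OF xS[OF that(1)]] inp[OF xS[OF that(2)]] spk[OF that(1)] spk[OF that(2)]] by simp
    hence lek: "\<forall>i\<le>k. x i = x' i" using that(3) restr_eq by (metis le_neq_implies_less)
    have "\<exists>i. x i \<noteq> x' i" using ne by auto
    define m where "m = (LEAST i. x i \<noteq> x' i)"
    have dm: "x m \<noteq> x' m" unfolding m_def by (rule LeastI_ex) fact
    have bm: "\<forall>i<m. x i = x' i" unfolding m_def using not_less_Least by blast
    have km: "k < m"
    proof (rule ccontr)
      assume "\<not> k < m" hence "m \<le> k" by simp
      with lek dm show False by blast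
    qed
    have s1: "splitting p (restr x m)"
      by (rule first_diff_split[OF xS[OF that(1)] xS[OF that(2)] bm dm])
    have s2: "splitting p (restr (cadd x t) m)"
      by (rule first_diff_split[OF yS[OF that(1)] yS[OF that(2)]]) (use bm dm in \<open>auto simp: cadd_def\<close>)
    have "restr x m = restr (cadd x t) m"
      by (rule skew_uniq[OF assms(2) inp[OF xS[OF that(1)]] inp[OF yS[OF that(1)]] s1 s2]) simp
    hence "\<forall>i<m. x i = cadd x t i" by (simp add: restr_eq)
    hence "x k = cadd x t k" using km by blast
    thus False using tk by (simp add: cadd_def)
  qed
  have injo: "inj_on (\<lambda>x. x k) S" using inj by (auto simp: inj_on_def)
  have "finite ((\<lambda>x. x k) ` S)" by simp
  hence finS: "finite S" using finite_imageD injo by blast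
  have "card S = card ((\<lambda>x. x k) ` S)" using injo card_image by metis
  also have "\<dots> \<le> card (UNIV :: bool set)" by (rule card_mono) auto
  finally have cS: "card S \<le> 2" by simp
  have nc: "\<not> compatible p (tree_add p t)"
  proof
    assume "compatible p (tree_add p t)"
    then obtain r where r: "perfect_tree r" "r \<subseteq> p" "r \<subseteq> tree_add p t"
      unfolding compatible_def Sacks_def by auto
    have tr: "is_tree r" and pf: "\<And>\<sigma>. \<sigma> \<in> r \<Longrightarrow> \<exists>\<tau>. splitting r (\<sigma> @ \<tau>)"
      using r(1) unfolding perfect_tree_def by auto
    have long: "\<exists>\<sigma>\<in>r. length \<sigma> \<ge> n" for n
    proof (induction n)
      case 0 then show ?case using tr unfolding is_tree_def by auto
    next
      case (Suc n)
      then obtain \<sigma> where "\<sigma> \<in> r" "length \<sigma> \<ge> n" by auto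
      then obtain \<tau> where "splitting r (\<sigma> @ \<tau>)" using pf by blast
      hence "\<sigma> @ \<tau> @ [False] \<in> r" unfolding splitting_def by simp
      thus ?case using \<open>length \<sigma> \<ge> n\<close> by (intro bexI[of _ "\<sigma> @ \<tau> @ [False]"]) auto
    qed
    obtain \<sigma>0 where "\<sigma>0 \<in> r" "length \<sigma>0 \<ge> Suc k" using long by blast
    then obtain \<tau> where sr: "splitting r (\<sigma>0 @ \<tau>)" using pf by blast
    define \<sigma> where "\<sigma> = \<sigma>0 @ \<tau>"
    have lk: "k < length \<sigma>" using \<open>length \<sigma>0 \<ge> Suc k\<close> unfolding \<sigma>_def by simp
    have sr': "\<sigma> @ [False] \<in> r" "\<sigma> @ [True] \<in> r" using sr unfolding \<sigma>_def splitting_def by auto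
    have "\<sigma> \<in> r" using sr'(1) tr unfolding is_tree_def by blast
    hence sig: "\<sigma> \<in> p" using r(2) by blast
    have s1: "splitting p \<sigma>" using sr' r(2) unfolding splitting_def by auto
    have a: "xorl \<sigma> t @ [b \<noteq> t (length \<sigma>)] \<in> p" if "\<sigma> @ [b] \<in> r" for b
      using tree_add_mem[of "\<sigma> @ [b]" p t] that r(3) by (auto simp: xorl_snoc)
    have s2: "splitting p (xorl \<sigma> t)"
      using a[OF sr'(1)] a[OF sr'(2)] unfolding splitting_def by (cases "t (length \<sigma>)") auto
    have isp: "is_tree p" using assms(1) unfolding Sacks_def perfect_tree_def by auto
    have x2: "xorl \<sigma> t \<in> p" using s2 isp unfolding splitting_def is_tree_def by blast
    have "\<sigma> = xorl \<sigma> t" by (rule skew_uniq[OF assms(2) sig x2 s1 s2]) simp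
    hence "\<sigma> ! k = xorl \<sigma> t ! k" by simp
    thus False using lk tk by simp
  qed
  show ?thesis using finS cS nc unfolding S_def by blast
qed

end
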